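(* Let $G$ be an abelian group and $S\subseteq G$ a finite nonempty set that tiles $G$ by translation. Then every $S$-polychromatic coloring of $G$ with $|S|$ colors is also a $(-S)$-polychromatic coloring, where $-S=\{-s:s\in S\}$.
   Context: For $A\subseteq G$, a coloring of $G$ is $A$-polychromatic if every translate $n+A=\{n+a:a\in A\}$, $n\in G$, contains an element of each color. $S$ tiles $G$ by translation if there is $T\subseteq G$ with $S+T=G$ such that $s_1+t_1=s_2+t_2$ with $s_i\in S$, $t_i\in T$ implies $s_1=s_2$ and $t_1=t_2$. *)

theory Defs
  imports Main
begin

definition translate :: "'a::ab_group_add \<Rightarrow> 'a set \<Rightarrow> 'a set" where
  "translate n A = {n + a | a. a \<in> A}"

definition polychromatic :: "'b set \<Rightarrow> 'a::ab_group_add set \<Rightarrow> ('a \<Rightarrow> 'b) \<Rightarrow> bool" where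
  "polychromatic C A c \<longleftrightarrow> (\<forall>n. \<forall>k\<in>C. \<exists>x\<in>translate n A. c x = k)"

definition tiles :: "'a::ab_group_add set \<Rightarrow> bool" where
  "tiles S \<longleftrightarrow> (\<exists>T. (\<forall>g. \<exists>s\<in>S. \<exists>t\<in>T. g = s + t) \<and>
     (\<forall>s1\<in>S. \<forall>s2\<in>S. \<forall>t1\<in>T. \<forall>t2\<in>T. s1 + t1 = s2 + t2 \<longrightarrow> s1 = s2 \<and> t1 = t2))"

end

theory Submission
  imports Defs
begin

lemma translate_img: "translate n A = (\<lambda>a. n + a) ` A"
  unfolding translate_def by auto

lemma rainbow_inj:
  fixes S :: "'a::ab_group_add set" and c :: "'a \<Rightarrow> 'b"
  assumes "finite S" "finite C" "card C = card S" "\<forall>x. c x \<in> C"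
    and "polychromatic C S c"
  shows "inj_on c ((\<lambda>a. m + a) ` S)"
proof -
  let ?M = "(\<lambda>a. m + a) ` S"
  have fin: "finite ?M" using assms(1) by simp
  have cardM: "card ?M = card S" by (rule card_image) (auto simp: inj_on_def)
  have "c ` ?M = C"
  proof
    show "c ` ?M \<subseteq> C" using assms(4) by auto
    show "C \<subseteq> c ` ?M"
    proof
      fix k assume "k \<in> C"
      then obtain x where "x \<in> translate m S" "c x = k"
        using assms(5) unfolding polychromatic_def by blast
      then show "k \<in> c ` ?M" unfolding translate_img by auto
    qed
  qed
  hence "card (c ` ?M) = card ?M" using cardM assms(3) by simp
  thus ?thesis using fin by (simp add: eq_card_imp_inj_on)
qed

theorem corollary15:
  fixes S :: "'a::ab_group_add set" and c :: "'a \<Rightarrow> 'b" and C :: "'b set"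
  assumes "finite S" and "S \<noteq> {}" and "tiles S"
    and "finite C" and "card C = card S" and "\<forall>x. c x \<in> C"
    and "polychromatic C S c"
  shows "polychromatic C (uminus ` S) c"
  unfolding polychromatic_def
proof (intro allI ballI)
  fix n k assume kC: "k \<in> C"
  let ?N = "(\<lambda>s. n - s) ` S"
  have injN: "inj_on c ?N"
  proof (rule inj_onI)
    fix x y assume "x \<in> ?N" "y \<in> ?N" "c x = c y"
    then obtain s1 s2 where s: "s1 \<in> S" "s2 \<in> S" "x = n - s1" "y = n - s2" by auto
    let ?m = "n - s1 - s2"
    have inj: "inj_on c ((\<lambda>a. ?m + a) ` S)"
      using rainbow_inj[OF assms(1,4,5,6,7)] by blast
    have "x = ?m + s2" "y = ?m + s1" using s by (simp_all add: algebra_simps)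
    moreover have "?m + s2 \<in> (\<lambda>a. ?m + a) ` S" "?m + s1 \<in> (\<lambda>a. ?m + a) ` S" using s by auto
    ultimately show "x = y" using inj \<open>c x = c y\<close> by (metis inj_on_def)
  qed
  have cardN: "card ?N = card S"
    by (rule card_image) (auto simp: inj_on_def)
  have sub: "c ` ?N \<subseteq> C" using assms(6) by auto
  have "card (c ` ?N) = card C" using card_image[OF injN] cardN assms(5) by simp
  hence "c ` ?N = C" using sub assms(4) by (simp add: card_subset_eq)
  then obtain x where "x \<in> ?N" "c x = k" using kC by (metis imageE)
  moreover have "?N = translate n (uminus ` S)"
    unfolding translate_img by (auto simp: image_image)
  ultimately show "\<exists>x\<in>translate n (uminus ` S). c x = k" by auto
qed

end
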